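(* Let $p$ be an odd prime and let $G$ be the non-abelian group of order $p^3$ and exponent $p$. Let $U = g_1 \cdot \dotsc \cdot g_m$ be a sequence over $G$ of length $m \geq p+1$ that has central product. If $U$ contains an EGZ subsequence, then there exists a permutation $\sigma$ of $\{1,\dots,m\}$ such that $g_{\sigma(1)} g_{\sigma(2)} \cdots g_{\sigma(m)} = 1$. In particular, every EGZ sequence over $G$ contains a non-empty product-one subsequence.
   Context: $G = \langle x, y : x^p = y^p = 1,\ [y,x] \text{ central}\rangle$ is the Heisenberg group of order $p^3$ and exponent $p$; here $Z(G) = [G,G]$ has order $p$. A sequence over $G$ is a finite unordered list (multiset) $g_1 \cdot \dotsc \cdot g_\ell$ of elements of $G$; its length is $\ell$; a subsequence is a sub-multiset. A non-empty sequence $T$ is product-one if, for some ordering of its terms, the product equals $1$. A sequence $T = g_1\cdot\dotsc\cdot g_\ell$ has central product if $g_1 g_2\cdots g_\ell \in Z(G)$ (since $[G,G]=Z(G)$, this does not depend on the ordering). A sequence $T$ over $G$ is an EGZ sequence if $T$ has central product and $T$ contains a subsequence consisting of $p$ terms which can be labelled $h_1,\dots,h_{p-1},h_p$ so that $h_p$ does not commute with the product $h_\alpha h_{\alpha+1}\cdots h_\beta$ for any $1 \le \alpha \le \beta \le p-1$. *)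

theory Defs
  imports "HOL-Algebra.Algebra" "HOL-Library.Multiset"
begin

definition center :: "('a, 'b) monoid_scheme \<Rightarrow> 'a set" where
  "center G = {z \<in> carrier G. \<forall>x \<in> carrier G. z \<otimes>\<^bsub>G\<^esub> x = x \<otimes>\<^bsub>G\<^esub> z}"

definition lprod :: "('a, 'b) monoid_scheme \<Rightarrow> 'a list \<Rightarrow> 'a" where
  "lprod G xs = foldr (\<lambda>x y. x \<otimes>\<^bsub>G\<^esub> y) xs \<one>\<^bsub>G\<^esub>"

text \<open>A sequence over G is a multiset of elements of the carrier.
  It has central product if the product (in any, hence every, order) lies in the center.\<close>
definition central_product :: "('a, 'b) monoid_scheme \<Rightarrow> 'a multiset \<Rightarrow> bool" where
  "central_product G T \<longleftrightarrow> (\<exists>xs. mset xs = T \<and> lprod G xs \<in> center G)"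

definition product_one :: "('a, 'b) monoid_scheme \<Rightarrow> 'a multiset \<Rightarrow> bool" where
  "product_one G T \<longleftrightarrow> T \<noteq> {#} \<and> (\<exists>xs. mset xs = T \<and> lprod G xs = \<one>\<^bsub>G\<^esub>)"

text \<open>EGZ sequence: central product, and a subsequence of p terms h_1..h_p
  (list hs, h_p = hs ! (p-1)) such that h_p does not commute with
  h_\<alpha> ... h_\<beta> for any 1 \<le> \<alpha> \<le> \<beta> \<le> p-1 (0-based: a \<le> b < p-1).\<close>
definition EGZ :: "('a, 'b) monoid_scheme \<Rightarrow> nat \<Rightarrow> 'a multiset \<Rightarrow> bool" where
  "EGZ G p T \<longleftrightarrow> central_product G T \<and>
     (\<exists>hs. length hs = p \<and> mset hs \<subseteq># T \<and>
        (\<forall>a b. a \<le> b \<and> b < p - 1 \<longrightarrow>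
           (let w = lprod G (take (b - a + 1) (drop a hs)) in
              hs ! (p - 1) \<otimes>\<^bsub>G\<^esub> w \<noteq> w \<otimes>\<^bsub>G\<^esub> hs ! (p - 1))))"

end

theory Submission
  imports Defs "HOL-Computational_Algebra.Primes" "HOL-Combinatorics.Permutations"
begin



context group
begin

lemma center_subgroup: "subgroup (center G) G"
proof (rule subgroupI)
  show "center G \<subseteq> carrier G" by (auto simp: center_def)
  show "center G \<noteq> {}" by (auto simp: center_def)
next
  fix a assume a: "a \<in> center G"
  hence ac: "a \<in> carrier G" and c: "\<forall>x\<in>carrier G. a \<otimes> x = x \<otimes> a" by (auto simp: center_def)
  have "inv a \<otimes> x = x \<otimes> inv a" if x: "x \<in> carrier G" for x
  proof -
    have "inv a \<otimes> x = inv a \<otimes> (x \<otimes> a) \<otimes> inv a" using x ac by (simp add: m_assoc)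
    also have "\<dots> = inv a \<otimes> (a \<otimes> x) \<otimes> inv a" using c x by metis
    also have "\<dots> = x \<otimes> inv a" using x ac by (simp add: m_assoc[symmetric])
    finally show ?thesis .
  qed
  thus "inv a \<in> center G" using ac by (auto simp: center_def)
next
  fix a b assume "a \<in> center G" "b \<in> center G"
  hence a: "a \<in> carrier G" "\<And>x. x \<in> carrier G \<Longrightarrow> a \<otimes> x = x \<otimes> a"
    and b: "b \<in> carrier G" "\<And>x. x \<in> carrier G \<Longrightarrow> b \<otimes> x = x \<otimes> b"
    by (auto simp: center_def)
  have "a \<otimes> b \<otimes> x = x \<otimes> (a \<otimes> b)" if x: "x \<in> carrier G" for x
  proof -
    have "a \<otimes> b \<otimes> x = a \<otimes> (b \<otimes> x)" using a(1) b(1) x by (simp add: m_assoc)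
    also have "\<dots> = a \<otimes> (x \<otimes> b)" using b(2)[OF x] by metis
    also have "\<dots> = (a \<otimes> x) \<otimes> b" using a(1) b(1) x by (simp add: m_assoc)
    also have "\<dots> = (x \<otimes> a) \<otimes> b" using a(2)[OF x] by metis
    also have "\<dots> = x \<otimes> (a \<otimes> b)" using a(1) b(1) x by (simp add: m_assoc)
    finally show ?thesis .
  qed
  thus "a \<otimes> b \<in> center G" using a(1) b(1) by (auto simp: center_def)
qed

definition centr :: "'a \<Rightarrow> 'a set" where
  "centr x = {y \<in> carrier G. x \<otimes> y = y \<otimes> x}"

lemma centr_subgroup: assumes x: "x \<in> carrier G" shows "subgroup (centr x) G"
proof (rule subgroupI)
  show "centr x \<subseteq> carrier G" by (auto simp: centr_def)
  show "centr x \<noteq> {}" using x by (auto simp: centr_def)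
next
  fix a assume a: "a \<in> centr x"
  hence ac: "a \<in> carrier G" and c: "x \<otimes> a = a \<otimes> x" by (auto simp: centr_def)
  have "inv a \<otimes> x = inv a \<otimes> (x \<otimes> a) \<otimes> inv a" using x ac by (simp add: m_assoc)
  also have "\<dots> = inv a \<otimes> (a \<otimes> x) \<otimes> inv a" using c by metis
  also have "\<dots> = x \<otimes> inv a" using x ac by (simp add: m_assoc[symmetric])
  finally show "inv a \<in> centr x" using ac by (auto simp: centr_def)
next
  fix a b assume "a \<in> centr x" "b \<in> centr x"
  hence a: "a \<in> carrier G" "x \<otimes> a = a \<otimes> x" and b: "b \<in> carrier G" "x \<otimes> b = b \<otimes> x"
    by (auto simp: centr_def)
  have "x \<otimes> (a \<otimes> b) = (x \<otimes> a) \<otimes> b" using a(1) b(1) x by (simp add: m_assoc)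
  also have "\<dots> = (a \<otimes> x) \<otimes> b" using a(2) by simp
  also have "\<dots> = a \<otimes> (x \<otimes> b)" using a(1) b(1) x by (simp add: m_assoc)
  also have "\<dots> = a \<otimes> (b \<otimes> x)" using b(2) by simp
  also have "\<dots> = a \<otimes> b \<otimes> x" using a(1) b(1) x by (simp add: m_assoc)
  finally show "a \<otimes> b \<in> centr x" using a(1) b(1) by (auto simp: centr_def)
qed

lemma card_subgroup_dvd: assumes "subgroup H G" shows "card H dvd order G"
  using lagrange[OF assms] by (metis dvd_triv_right)

lemma card_center_not_pred:
  assumes fin: "finite (carrier G)" and p: "Factorial_Ring.prime p" and ord: "order G = p ^ Suc k"
  shows "card (center G) \<noteq> p ^ k"
proof
  assume c: "card (center G) = p ^ k"
  have "center G \<noteq> carrier G"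
  proof
    assume "center G = carrier G"
    hence "order G = p ^ k" using c by (simp add: order_def)
    moreover have "p ^ k < p ^ Suc k" using prime_gt_1_nat[OF p] by (intro power_strict_increasing) auto
    ultimately show False using ord by linarith
  qed
  then obtain x where x: "x \<in> carrier G" "x \<notin> center G" using center_subgroup subgroup.subset by blast
  have sub: "insert x (center G) \<subseteq> centr x"
    using x by (auto simp: centr_def center_def)
  have fc: "finite (centr x)" using fin by (rule rev_finite_subset) (auto simp: centr_def)
  have "card (insert x (center G)) \<le> card (centr x)" using card_mono[OF fc sub] .
  moreover have "finite (center G)" using fin by (rule rev_finite_subset) (auto simp: center_def)
  ultimately have gt: "card (centr x) > p ^ k" using x c by simp
  have "card (centr x) dvd p ^ Suc k" using card_subgroup_dvd[OF centr_subgroup[OF x(1)]] ord by simp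
  then obtain i where i: "i \<le> Suc k" "card (centr x) = p ^ i" using divides_primepow_nat[OF p] by blast
  have "i = Suc k"
  proof (rule ccontr)
    assume "i \<noteq> Suc k" hence "i \<le> k" using i by simp
    hence "p ^ i \<le> p ^ k" using power_increasing[of i k p] prime_gt_0_nat[OF p] by simp
    thus False using gt i by simp
  qed
  hence "card (centr x) = order G" using i ord by simp
  moreover have "centr x \<subseteq> carrier G" by (auto simp: centr_def)
  ultimately have "centr x = carrier G" using fin by (intro card_subset_eq) (auto simp: order_def)
  hence "x \<in> center G" using x(1) by (auto simp: centr_def center_def)
  thus False using x by simp
qed

end



context group
begin

lemma inv_cancel_l [simp]: "x \<in> carrier G \<Longrightarrow> y \<in> carrier G \<Longrightarrow> inv x \<otimes> (x \<otimes> y) = y"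
  by (simp add: m_assoc[symmetric])

lemma inv_cancel_r [simp]: "x \<in> carrier G \<Longrightarrow> y \<in> carrier G \<Longrightarrow> x \<otimes> (inv x \<otimes> y) = y"
  by (simp add: m_assoc[symmetric])

lemma p_dvd_card_center:
  assumes fin: "finite (carrier G)" and p: "Factorial_Ring.prime p" and ord: "order G = p ^ Suc k"
  shows "p dvd card (center G)"
proof -
  define cj where "cj = (\<lambda>g. \<lambda>h \<in> carrier G. g \<otimes> h \<otimes> inv g)"
  interpret A: group_action G "carrier G" cj unfolding cj_def by (rule action_by_conjugation)
  define f where "f = (\<lambda>x. if x \<in> center G then 1 else 0 :: nat)"
  have orb: "(\<Sum>y\<in>orb. f y) mod p = card orb mod p" if orbin: "orb \<in> orbits G (carrier G) cj" for orb
  proof -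
    obtain x where x: "x \<in> carrier G" "orb = orbit G cj x" using orbin unfolding orbits_def by auto
    have phx: "\<And>g. cj g x = g \<otimes> x \<otimes> inv g" using x(1) by (simp add: cj_def)
    have orbeq: "orb = {g \<otimes> x \<otimes> inv g | g. g \<in> carrier G}" unfolding x(2) orbit_def phx ..
    have cs: "card orb * card (stabilizer G cj x) = order G"
      unfolding x(2) by (rule A.orbit_stabilizer_theorem[OF x(1)])
    have "card orb dvd order G" unfolding cs[symmetric] by simp
    hence "card orb dvd p ^ Suc k" using ord by simp
    hence "\<exists>i\<le>Suc k. card orb = p ^ i" by (simp only: divides_primepow_nat[OF p])
    then obtain i where i: "card orb = p ^ i" by blast
    have xo: "x \<in> orb" unfolding x(2) by (rule A.orbit_refl[OF x(1)])
    have orb_sub: "orb \<subseteq> carrier G" using orbeq x(1) by auto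
    have forb: "finite orb" using orb_sub fin by (rule finite_subset)
    show ?thesis
    proof (cases "i = 0")
      case True
      then have "card orb = 1" by (simp add: i)
      then obtain z where "orb = {z}" by (rule card_1_singletonE)
      then have o1: "orb = {x}" using xo by simp
      have "h \<otimes> x = x \<otimes> h" if h: "h \<in> carrier G" for h
      proof -
        have "h \<otimes> x \<otimes> inv h \<in> orb" using orbeq h by blast
        hence e: "h \<otimes> x \<otimes> inv h = x" using o1 by blast
        have "h \<otimes> x = h \<otimes> x \<otimes> inv h \<otimes> h" using h x(1) by (simp add: m_assoc)
        also have "\<dots> = x \<otimes> h" using e by metis
        finally show ?thesis .
      qed
      hence "x \<in> center G" using x(1) by (auto simp: center_def)
      then show ?thesis using o1 by (simp add: f_def)
    next
      case False
      then have pd: "p dvd card orb" using i by simp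
      have nz: "y \<notin> center G" if y: "y \<in> orb" for y
      proof
        assume yc: "y \<in> center G"
        hence yC: "y \<in> carrier G" "\<And>g. g \<in> carrier G \<Longrightarrow> y \<otimes> g = g \<otimes> y" by (auto simp: center_def)
        have conj: "g \<otimes> y \<otimes> inv g = y" if g: "g \<in> carrier G" for g
        proof -
          have "g \<otimes> y \<otimes> inv g = y \<otimes> g \<otimes> inv g" using yC(2)[OF g] by metis
          also have "\<dots> = y" using g yC(1) by (simp add: m_assoc)
          finally show ?thesis .
        qed
        obtain h where h: "h \<in> carrier G" "y = h \<otimes> x \<otimes> inv h" using y orbeq by blast
        have "inv h \<otimes> y \<otimes> inv (inv h) = x" using h x(1) by (simp add: m_assoc)
        hence xy: "x = y" using conj[of "inv h"] h(1) by simp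
        have "orb \<subseteq> {y}" using orbeq conj xy by auto
        hence "card orb \<le> 1" using card_mono[of "{y}" orb] by simp
        moreover have "0 < card orb" using forb xo card_gt_0_iff by blast
        hence "p \<le> card orb" using pd by (simp add: dvd_imp_le)
        ultimately show False using prime_gt_1_nat[OF p] by simp
      qed
      have "(\<Sum>y\<in>orb. f y) = 0" using nz by (simp add: f_def)
      then show ?thesis using pd by simp
    qed
  qed
  have zs: "center G \<subseteq> carrier G" by (auto simp: center_def)
  have "card (center G) = (\<Sum>x\<in>carrier G. f x)"
  proof -
    have "(\<Sum>x\<in>carrier G. f x) = (\<Sum>x\<in>center G. 1)"
      using fin zs by (intro sum.mono_neutral_cong_right) (auto simp: f_def)
    thus ?thesis by simp
  qed
  also have "\<dots> = (\<Sum>orb\<in>orbits G (carrier G) cj. \<Sum>x\<in>orb. f x)"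
    by (rule A.disjoint_sum[OF fin, symmetric])
  finally have c1: "card (center G) mod p = (\<Sum>orb\<in>orbits G (carrier G) cj. (\<Sum>x\<in>orb. f x) mod p) mod p"
    by (simp add: mod_sum_eq)
  also have "\<dots> = (\<Sum>orb\<in>orbits G (carrier G) cj. card orb mod p) mod p"
    using orb by (simp cong: sum.cong)
  also have "\<dots> = (\<Sum>orb\<in>orbits G (carrier G) cj. card orb) mod p"
    by (simp add: mod_sum_eq)
  also have "(\<Sum>orb\<in>orbits G (carrier G) cj. card orb) = card (carrier G)"
  proof -
    have "(\<Sum>orb\<in>orbits G (carrier G) cj. \<Sum>x\<in>orb. (1::nat)) = (\<Sum>x\<in>carrier G. 1)"
      by (rule A.disjoint_sum[OF fin])
    thus ?thesis by simp
  qed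
  also have "\<dots> = p ^ Suc k" using ord by (simp add: order_def)
  finally show ?thesis by (simp add: mod_eq_0_iff_dvd)
qed

end



context group
begin

lemma card_center_eq_p:
  assumes fin: "finite (carrier G)" and p: "Factorial_Ring.prime p" and ord: "order G = p ^ 3"
    and nonab: "\<exists>x\<in>carrier G. \<exists>y\<in>carrier G. x \<otimes> y \<noteq> y \<otimes> x"
  shows "card (center G) = p"
proof -
  have zs: "center G \<subseteq> carrier G" by (auto simp: center_def)
  have "card (center G) dvd p ^ 3" using card_subgroup_dvd[OF center_subgroup] ord by simp
  hence "\<exists>i\<le>3. card (center G) = p ^ i" by (simp only: divides_primepow_nat[OF p])
  then obtain i where i: "i \<le> 3" "card (center G) = p ^ i" by blast
  have d: "p dvd card (center G)" using p_dvd_card_center[OF fin p, of 2] ord by (simp add: numeral_eq_Suc)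
  have "i \<noteq> 0"
  proof
    assume "i = 0" hence "p dvd 1" using d i by simp
    thus False using p by simp
  qed
  moreover have "i \<noteq> 2" using card_center_not_pred[OF fin p, of 2] ord i by (auto simp: numeral_eq_Suc)
  moreover have "i \<noteq> 3"
  proof
    assume "i = 3"
    hence "card (center G) = card (carrier G)" using i ord by (simp add: order_def)
    hence "center G = carrier G" using fin zs by (intro card_subset_eq) auto
    thus False using nonab by (auto simp: center_def)
  qed
  ultimately have "i = 1" using i by linarith
  thus ?thesis using i by simp
qed

lemma center_normal: "center G \<lhd> G"
proof -
  have "x \<otimes> h \<otimes> inv x \<in> center G" if x: "x \<in> carrier G" and h: "h \<in> center G" for x h
  proof -
    have hc: "h \<in> carrier G" using h by (auto simp: center_def)
    have "x \<otimes> h = h \<otimes> x" using h x by (auto simp: center_def)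
    hence "x \<otimes> h \<otimes> inv x = h \<otimes> x \<otimes> inv x" by simp
    also have "\<dots> = h" using x hc by (simp add: m_assoc)
    finally show ?thesis using h by simp
  qed
  thus ?thesis using center_subgroup by (simp add: normal_inv_iff)
qed

lemma comm_mod_center:
  assumes fin: "finite (carrier G)" and p: "Factorial_Ring.prime p" and ord: "order G = p ^ 3"
    and nonab: "\<exists>x\<in>carrier G. \<exists>y\<in>carrier G. x \<otimes> y \<noteq> y \<otimes> x"
    and x: "x \<in> carrier G" and y: "y \<in> carrier G"
  shows "\<exists>z\<in>center G. x \<otimes> y = z \<otimes> (y \<otimes> x)"
proof -
  define Z where "Z = center G"
  interpret N: normal Z G unfolding Z_def by (rule center_normal)
  define Q where "Q = G Mod Z"
  have gQ: "group Q" unfolding Q_def by (rule N.factorgroup_is_group)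
  have cZ: "card Z = p" unfolding Z_def by (rule card_center_eq_p[OF fin p ord nonab])
  have cQ: "carrier Q = rcosets Z" by (simp add: Q_def FactGroup_def)
  have finQ: "finite (carrier Q)" unfolding cQ RCOSETS_def using fin by simp
  have "card (rcosets Z) * p = p ^ 3" using lagrange[OF N.subgroup_axioms] cZ ord by simp
  hence "card (rcosets Z) = p ^ 2" using prime_gt_0_nat[OF p] by (simp add: numeral_eq_Suc)
  hence oQ: "order Q = p ^ Suc 1" by (simp add: order_def cQ power2_eq_square)
  have zQs: "center Q \<subseteq> carrier Q" by (auto simp: center_def)
  have "card (center Q) dvd p ^ 2"
    using group.card_subgroup_dvd[OF gQ group.center_subgroup[OF gQ]] oQ by (simp add: power2_eq_square)
  hence "\<exists>i\<le>2. card (center Q) = p ^ i" by (simp only: divides_primepow_nat[OF p])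
  then obtain i where i: "i \<le> 2" "card (center Q) = p ^ i" by blast
  have d: "p dvd card (center Q)" using group.p_dvd_card_center[OF gQ finQ p oQ] .
  have "i \<noteq> 0"
  proof
    assume "i = 0" hence "p dvd 1" using d i by simp
    thus False using p by simp
  qed
  moreover have "i \<noteq> 1" using group.card_center_not_pred[OF gQ finQ p oQ] i by auto
  ultimately have "i = 2" using i by linarith
  hence "card (center Q) = card (carrier Q)" using i oQ by (simp add: order_def power2_eq_square)
  hence cc: "center Q = carrier Q" using finQ zQs by (intro card_subset_eq) auto
  have xQ: "Z #> x \<in> carrier Q" and yQ: "Z #> y \<in> carrier Q" using x y cQ by (auto simp: RCOSETS_def)
  have "(Z #> x) <#> (Z #> y) = (Z #> y) <#> (Z #> x)"
    using xQ yQ cc unfolding center_def by (auto simp: Q_def)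
  hence "Z #> (x \<otimes> y) = Z #> (y \<otimes> x)" using x y by (simp add: N.rcos_sum)
  moreover have "x \<otimes> y \<in> Z #> (x \<otimes> y)" using x y by (simp add: rcos_self N.subgroup_axioms)
  ultimately have "x \<otimes> y \<in> Z #> (y \<otimes> x)" by simp
  then obtain z where "z \<in> Z" "x \<otimes> y = z \<otimes> (y \<otimes> x)" unfolding r_coset_def by auto
  thus ?thesis unfolding Z_def by blast
qed

end



context group
begin

lemma lprod_Nil [simp]: "lprod G [] = \<one>" by (simp add: lprod_def)
lemma lprod_Cons [simp]: "lprod G (x # xs) = x \<otimes> lprod G xs" by (simp add: lprod_def)

lemma lprod_closed [simp]: "set xs \<subseteq> carrier G \<Longrightarrow> lprod G xs \<in> carrier G"
  by (induct xs) auto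

lemma lprod_append: "set xs \<subseteq> carrier G \<Longrightarrow> set ys \<subseteq> carrier G \<Longrightarrow>
    lprod G (xs @ ys) = lprod G xs \<otimes> lprod G ys"
  by (induct xs) (auto simp: m_assoc)

lemma center_carrier: "z \<in> center G \<Longrightarrow> z \<in> carrier G" by (auto simp: center_def)
lemma center_comm: "z \<in> center G \<Longrightarrow> x \<in> carrier G \<Longrightarrow> z \<otimes> x = x \<otimes> z" by (auto simp: center_def)

lemma lprod_perm:
  assumes comm: "\<And>x y. x \<in> carrier G \<Longrightarrow> y \<in> carrier G \<Longrightarrow> \<exists>z\<in>center G. x \<otimes> y = z \<otimes> (y \<otimes> x)"
  shows "mset ys = mset xs \<Longrightarrow> set xs \<subseteq> carrier G \<Longrightarrow> \<exists>z\<in>center G. lprod G ys = z \<otimes> lprod G xs"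
proof (induct xs arbitrary: ys)
  case Nil
  thus ?case using subgroup.one_closed[OF center_subgroup] by (intro bexI[of _ "\<one>"]) auto
next
  case (Cons x xs)
  have "x \<in> set ys" using Cons.prems(1) by (metis list.set_intros(1) mset_eq_setD)
  then obtain ys1 ys2 where ys: "ys = ys1 @ x # ys2" by (meson split_list)
  have m: "mset (ys1 @ ys2) = mset xs" using Cons.prems(1) ys by simp
  have xc: "x \<in> carrier G" and xsc: "set xs \<subseteq> carrier G" using Cons.prems(2) by auto
  have ysc: "set ys \<subseteq> carrier G" using Cons.prems(2) mset_eq_setD[OF Cons.prems(1)] by simp
  hence y1: "set ys1 \<subseteq> carrier G" and y2: "set ys2 \<subseteq> carrier G" using ys by auto
  obtain z1 where z1: "z1 \<in> center G" "lprod G (ys1 @ ys2) = z1 \<otimes> lprod G xs"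
    using Cons.hyps[OF m xsc] by blast
  define A where "A = lprod G ys1"
  define B where "B = lprod G ys2"
  have A: "A \<in> carrier G" and B: "B \<in> carrier G" using y1 y2 by (simp_all add: A_def B_def)
  obtain z2 where z2: "z2 \<in> center G" "A \<otimes> x = z2 \<otimes> (x \<otimes> A)" using comm[OF A xc] by blast
  have z1c: "z1 \<in> carrier G" and z2c: "z2 \<in> carrier G" using z1 z2 center_carrier by auto
  have L: "lprod G xs \<in> carrier G" using xsc by simp
  have "lprod G ys = A \<otimes> (x \<otimes> B)" using ys y1 y2 xc by (simp add: lprod_append A_def B_def)
  also have "\<dots> = (A \<otimes> x) \<otimes> B" using A B xc by (simp add: m_assoc)
  also have "\<dots> = z2 \<otimes> (x \<otimes> A) \<otimes> B" using z2(2) by simp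
  also have "\<dots> = z2 \<otimes> (x \<otimes> (A \<otimes> B))" using A B xc z2c by (simp add: m_assoc)
  also have "A \<otimes> B = z1 \<otimes> lprod G xs" using z1(2) y1 y2 by (simp add: lprod_append A_def B_def)
  also have "x \<otimes> (z1 \<otimes> lprod G xs) = z1 \<otimes> (x \<otimes> lprod G xs)"
  proof -
    have "x \<otimes> (z1 \<otimes> lprod G xs) = (x \<otimes> z1) \<otimes> lprod G xs" using xc z1c L by (simp add: m_assoc)
    also have "x \<otimes> z1 = z1 \<otimes> x" using center_comm[OF z1(1) xc] by simp
    also have "z1 \<otimes> x \<otimes> lprod G xs = z1 \<otimes> (x \<otimes> lprod G xs)" using xc z1c L by (simp add: m_assoc)
    finally show ?thesis .
  qed
  also have "z2 \<otimes> (z1 \<otimes> (x \<otimes> lprod G xs)) = (z2 \<otimes> z1) \<otimes> lprod G (x # xs)"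
    using xc z1c z2c L by (simp add: m_assoc)
  finally show ?case using subgroup.m_closed[OF center_subgroup z2(1) z1(1)] by blast
qed

lemma core:
  assumes comm: "\<And>x y. x \<in> carrier G \<Longrightarrow> y \<in> carrier G \<Longrightarrow> \<exists>z\<in>center G. x \<otimes> y = z \<otimes> (y \<otimes> x)"
    and fin: "finite (carrier G)" and cZ: "card (center G) = p" and p1: "p \<ge> 1"
    and Lc: "set L \<subseteq> carrier G" and Lz: "lprod G L \<in> center G"
    and hl: "length hs = p" and hsub: "mset hs \<subseteq># mset L"
    and nc: "\<forall>a b. a \<le> b \<and> b < p - 1 \<longrightarrow>
           (let w = lprod G (take (b - a + 1) (drop a hs)) in
              hs ! (p - 1) \<otimes> w \<noteq> w \<otimes> hs ! (p - 1))"
  shows "\<exists>W. mset W = mset L \<and> lprod G W = \<one>"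
proof -
  obtain R where R: "mset R = mset L - mset hs" using ex_mset by blast
  define hp where "hp = hs ! (p - 1)"
  define hs' where "hs' = take (p - 1) hs"
  have hseq: "hs = hs' @ [hp]"
  proof -
    have "take (Suc (p - 1)) hs = take (p - 1) hs @ [hs ! (p - 1)]"
      using hl p1 by (intro take_Suc_conv_app_nth) simp
    thus ?thesis using hl p1 by (simp add: hs'_def hp_def)
  qed
  have lhs': "length hs' = p - 1" using hl by (simp add: hs'_def)
  define W where "W = (\<lambda>k. R @ take k hs' @ hp # drop k hs')"
  have mW: "mset (W k) = mset L" for k
  proof -
    have "mset (W k) = mset R + mset hs" unfolding W_def hseq
      by (simp add: union_ac) (metis append_take_drop_id mset_append union_commute)
    also have "\<dots> = mset L" using R hsub by (simp add: subset_mset.diff_add)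
    finally show ?thesis .
  qed
  have Wc: "set (W k) \<subseteq> carrier G" for k using mset_eq_setD[OF mW[of k]] Lc by simp
  have Rc: "set R \<subseteq> carrier G" and hs'c: "set hs' \<subseteq> carrier G" and hpc: "hp \<in> carrier G"
    using Wc[of 0] by (auto simp: W_def)
  define P where "P = (\<lambda>k. lprod G (W k))"
  have Pz: "P k \<in> center G" for k
  proof -
    obtain z where "z \<in> center G" "P k = z \<otimes> lprod G L"
      using lprod_perm[OF comm mW[of k] Lc] unfolding P_def by blast
    thus ?thesis using Lz subgroup.m_closed[OF center_subgroup] by simp
  qed
  have inj: "inj_on P {0..<p}"
  proof (rule inj_onI, rule ccontr)
    have key: False if kl: "k < l" "l < p" "P k = P l" for k l
    proof -
      define A where "A = lprod G R \<otimes> lprod G (take k hs')"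
      define B where "B = lprod G (take (l - k) (drop k hs'))"
      define C where "C = lprod G (drop l hs')"
      have sA: "set (take k hs') \<subseteq> carrier G" using hs'c by (meson in_set_takeD subset_iff)
      have sB: "set (take (l - k) (drop k hs')) \<subseteq> carrier G" using hs'c by (meson in_set_takeD in_set_dropD subset_iff)
      have sL: "set (take l hs') \<subseteq> carrier G" using hs'c by (meson in_set_takeD subset_iff)
      have sC: "set (drop l hs') \<subseteq> carrier G" using hs'c by (meson in_set_dropD subset_iff)
      have sD: "set (drop k hs') \<subseteq> carrier G" using hs'c by (meson in_set_dropD subset_iff)
      have Ac: "A \<in> carrier G" and Bc: "B \<in> carrier G" and Cc: "C \<in> carrier G"
        using Rc sA sB sC by (simp_all add: A_def B_def C_def)
      have d: "drop k hs' = take (l - k) (drop k hs') @ drop l hs'"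
        using kl by (metis append_take_drop_id drop_drop le_add_diff_inverse2 less_imp_le)
      have t: "take l hs' = take k hs' @ take (l - k) (drop k hs')"
        using kl by (metis le_add_diff_inverse less_imp_le take_add)
      have pk: "P k = A \<otimes> (hp \<otimes> (B \<otimes> C))"
      proof -
        have "P k = lprod G R \<otimes> (lprod G (take k hs') \<otimes> (hp \<otimes> lprod G (drop k hs')))"
          unfolding P_def W_def using Rc sA sD hpc by (simp add: lprod_append)
        also have "lprod G (drop k hs') = B \<otimes> C"
          unfolding B_def C_def by (subst d) (rule lprod_append[OF sB sC])
        finally show ?thesis using Rc sA Bc Cc hpc by (simp add: A_def m_assoc)
      qed
      have pl: "P l = A \<otimes> (B \<otimes> (hp \<otimes> C))"
      proof -
        have "P l = lprod G R \<otimes> (lprod G (take l hs') \<otimes> (hp \<otimes> C))"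
          unfolding P_def W_def C_def using Rc sL sC hpc by (simp add: lprod_append)
        also have "lprod G (take l hs') = lprod G (take k hs') \<otimes> B"
          unfolding B_def by (subst t) (rule lprod_append[OF sA sB])
        finally show ?thesis using Rc sA Bc Cc hpc by (simp add: A_def m_assoc)
      qed
      have "A \<otimes> (hp \<otimes> (B \<otimes> C)) = A \<otimes> (B \<otimes> (hp \<otimes> C))" using kl(3) by (simp only: pk pl)
      hence "hp \<otimes> (B \<otimes> C) = B \<otimes> (hp \<otimes> C)" by (metis l_cancel Ac Bc Cc hpc m_closed)
      hence "(hp \<otimes> B) \<otimes> C = (B \<otimes> hp) \<otimes> C" by (metis m_assoc Bc Cc hpc)
      hence e: "hp \<otimes> B = B \<otimes> hp" by (metis r_cancel Bc Cc hpc m_closed)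
      have lk: "l - 1 - k + 1 = l - k" using kl by linarith
      have "take (l - 1 - k + 1) (drop k hs) = take (l - k) (drop k hs')"
        unfolding lk using kl hl by (simp add: hs'_def drop_take min_def)
      hence Beq: "lprod G (take (l - 1 - k + 1) (drop k hs)) = B" by (simp add: B_def)
      have "k \<le> l - 1 \<and> l - 1 < p - 1" using kl by linarith
      hence "hs ! (p - 1) \<otimes> lprod G (take (l - 1 - k + 1) (drop k hs)) \<noteq>
             lprod G (take (l - 1 - k + 1) (drop k hs)) \<otimes> hs ! (p - 1)"
        using nc unfolding Let_def by blast
      hence "hp \<otimes> B \<noteq> B \<otimes> hp" unfolding Beq hp_def .
      thus False using e by contradiction
    qed
    fix k l assume "k \<in> {0..<p}" "l \<in> {0..<p}" "P k = P l" "k \<noteq> l"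
    thus False using key[of k l] key[of l k] by (cases "k < l") auto
  qed
  have "P ` {0..<p} \<subseteq> center G" using Pz by auto
  moreover have "card (P ` {0..<p}) = card (center G)" using card_image[OF inj] cZ by simp
  moreover have "finite (center G)" using fin by (rule rev_finite_subset) (auto simp: center_def)
  ultimately have "P ` {0..<p} = center G" by (intro card_subset_eq) auto
  moreover have "\<one> \<in> center G" using subgroup.one_closed[OF center_subgroup] .
  ultimately obtain k where "P k = \<one>" by (metis imageE)
  thus ?thesis using mW[of k] unfolding P_def by blast
qed

end



theorem theorem1p3:
  fixes G :: "('a, 'b) monoid_scheme" and p :: nat
  assumes "group G"
    and "Factorial_Ring.prime p" and "odd p"
    and "finite (carrier G)" and "order G = p ^ 3"
    and "\<forall>x \<in> carrier G. x [^]\<^bsub>G\<^esub> p = \<one>\<^bsub>G\<^esub>"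
    and "\<exists>x \<in> carrier G. \<exists>y \<in> carrier G. x \<otimes>\<^bsub>G\<^esub> y \<noteq> y \<otimes>\<^bsub>G\<^esub> x"
  shows "(\<forall>g :: nat \<Rightarrow> 'a. \<forall>m.
            (\<forall>i < m. g i \<in> carrier G) \<longrightarrow> m \<ge> p + 1 \<longrightarrow>
            lprod G (map g [0..<m]) \<in> center G \<longrightarrow>
            (\<exists>T. T \<subseteq># mset (map g [0..<m]) \<and> EGZ G p T) \<longrightarrow>
            (\<exists>\<sigma>. \<sigma> permutes {0..<m} \<and> lprod G (map (g \<circ> \<sigma>) [0..<m]) = \<one>\<^bsub>G\<^esub>))
       \<and> (\<forall>T. set_mset T \<subseteq> carrier G \<longrightarrow> EGZ G p T \<longrightarrow>
            (\<exists>S. S \<subseteq># T \<and> product_one G S))"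
proof -
  interpret group G by (rule assms(1))
  have p: "Factorial_Ring.prime p" by (rule assms(2))
  have p1: "p \<ge> 1" using prime_gt_0_nat[OF p] by simp
  have comm: "\<And>x y. x \<in> carrier G \<Longrightarrow> y \<in> carrier G \<Longrightarrow> \<exists>z\<in>center G. x \<otimes>\<^bsub>G\<^esub> y = z \<otimes>\<^bsub>G\<^esub> (y \<otimes>\<^bsub>G\<^esub> x)"
    using comm_mod_center[OF assms(4) p assms(5) assms(7)] by blast
  have cZ: "card (center G) = p" using card_center_eq_p[OF assms(4) p assms(5) assms(7)] .
  have C: "\<exists>W. mset W = mset L \<and> lprod G W = \<one>\<^bsub>G\<^esub>"
    if Lc: "set L \<subseteq> carrier G" and Lz: "lprod G L \<in> center G" and E: "EGZ G p T"
      and TL: "T \<subseteq># mset L" for L T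
  proof -
    obtain hs where hs: "length hs = p" "mset hs \<subseteq># T"
      "\<forall>a b. a \<le> b \<and> b < p - 1 \<longrightarrow>
           (let w = lprod G (take (b - a + 1) (drop a hs)) in
              hs ! (p - 1) \<otimes>\<^bsub>G\<^esub> w \<noteq> w \<otimes>\<^bsub>G\<^esub> hs ! (p - 1))"
      using E unfolding EGZ_def by blast
    have "mset hs \<subseteq># mset L" using hs(2) TL by (rule subset_mset.order_trans)
    thus ?thesis using core[OF comm assms(4) cZ p1 Lc Lz hs(1) _ hs(3)] by blast
  qed
  have part1: "\<exists>\<sigma>. \<sigma> permutes {0..<m} \<and> lprod G (map (g \<circ> \<sigma>) [0..<m]) = \<one>\<^bsub>G\<^esub>"
    if gc: "\<forall>i < m. g i \<in> carrier G" and Lz: "lprod G (map g [0..<m]) \<in> center G"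
      and T: "T \<subseteq># mset (map g [0..<m])" "EGZ G p T" for g m T
  proof -
    have Lc: "set (map g [0..<m]) \<subseteq> carrier G" using gc by auto
    obtain W where W: "mset W = mset (map g [0..<m])" "lprod G W = \<one>\<^bsub>G\<^esub>"
      using C[OF Lc Lz T(2) T(1)] by blast
    obtain \<sigma> where s: "\<sigma> permutes {..<length (map g [0..<m])}"
      "permute_list \<sigma> (map g [0..<m]) = W"
      using mset_eq_permutation[OF W(1)] by blast
    have s': "\<sigma> permutes {0..<m}" using s(1) by (simp add: lessThan_atLeast0)
    have "permute_list \<sigma> (map g [0..<m]) = map (g \<circ> \<sigma>) [0..<m]"
      unfolding permute_list_def using permutes_in_image[OF s'] by auto
    thus ?thesis using s' s(2) W(2) by auto
  qed
  have part2: "\<exists>S. S \<subseteq># T \<and> product_one G S"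
    if Tc: "set_mset T \<subseteq> carrier G" and E: "EGZ G p T" for T
  proof -
    obtain xs where xs: "mset xs = T" "lprod G xs \<in> center G"
      using E unfolding EGZ_def central_product_def by blast
    have Lc: "set xs \<subseteq> carrier G" using Tc xs(1) by auto
    obtain W where W: "mset W = mset xs" "lprod G W = \<one>\<^bsub>G\<^esub>"
      using C[OF Lc xs(2) E] xs(1) by blast
    obtain hs where hs: "length hs = p" "mset hs \<subseteq># T"
      using E unfolding EGZ_def by blast
    have "T \<noteq> {#}" using hs p1 by (auto simp: subset_mset.le_bot)
    hence "product_one G T" unfolding product_one_def using W xs(1) by auto
    thus ?thesis by blast
  qed
  show ?thesis using part1 part2 by blast
qed



end
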